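(* Let $A,B,C$ be smooth functions on $[0,1]$ and consider the Abel equation $$\frac{dx}{dt}=A(t)x^3+B(t)x^2+C(t)x,\qquad t\in[0,1].$$ Assume that $\int_0^1C(t)\,dt=0$ and that there exist real numbers $a,b$ such that the function $$aA(t)\exp\left(\int_0^tC(s)\,ds\right)+bB(t)$$ does not vanish identically and does not change sign on $[0,1]$. Then the equation has at most one non-zero periodic orbit, and when this periodic orbit exists it is hyperbolic.
   Context: A periodic orbit is a solution $x(t)$ defined on all of $[0,1]$ with $x(0)=x(1)$; $x\equiv0$ is always one, and non-zero periodic orbits are the others. The Poincaré map is $\Pi(x_0)=x(1;x_0)$ where $x(t;x_0)$ is the solution with $x(0;x_0)=x_0$; a periodic orbit with initial condition $x_0$ is hyperbolic if $\Pi'(x_0)\ne1$. *)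

theory Defs
  imports "HOL-Analysis.Analysis"
begin

definition smooth_on :: "real set \<Rightarrow> (real \<Rightarrow> real) \<Rightarrow> bool" where
  "smooth_on S f \<longleftrightarrow> (\<exists>D. D 0 = f \<and>
      (\<forall>n. \<forall>t\<in>S. (D n has_real_derivative D (Suc n) t) (at t within S)))"

definition abel_sol :: "(real \<Rightarrow> real) \<Rightarrow> (real \<Rightarrow> real) \<Rightarrow> (real \<Rightarrow> real) \<Rightarrow> (real \<Rightarrow> real) \<Rightarrow> bool" where
  "abel_sol A B C x \<longleftrightarrow> (\<forall>t\<in>{0..1}.
      (x has_real_derivative (A t * (x t)^3 + B t * (x t)^2 + C t * x t)) (at t within {0..1}))"

definition periodic_orbit :: "(real \<Rightarrow> real) \<Rightarrow> (real \<Rightarrow> real) \<Rightarrow> (real \<Rightarrow> real) \<Rightarrow> (real \<Rightarrow> real) \<Rightarrow> bool" where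
  "periodic_orbit A B C x \<longleftrightarrow> abel_sol A B C x \<and> x 0 = x 1"

definition nonzero_on01 :: "(real \<Rightarrow> real) \<Rightarrow> bool" where
  "nonzero_on01 x \<longleftrightarrow> (\<exists>t\<in>{0..1}. x t \<noteq> 0)"

definition poincare :: "(real \<Rightarrow> real) \<Rightarrow> (real \<Rightarrow> real) \<Rightarrow> (real \<Rightarrow> real) \<Rightarrow> real \<Rightarrow> real" where
  "poincare A B C x0 = (THE y. \<exists>x. abel_sol A B C x \<and> x 0 = x0 \<and> x 1 = y)"

end

theory Submission
  imports Defs
begin

lemma smooth_cont: "smooth_on S f \<Longrightarrow> continuous_on S f"
  unfolding smooth_on_def by (metis DERIV_continuous_on)

lemma sol_cont: "abel_sol A B C x \<Longrightarrow> continuous_on {0..1} x"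
  unfolding abel_sol_def by (rule DERIV_continuous_on) auto

lemma ftc_real:
  assumes "a \<le> b" "\<And>s. s \<in> {a..b} \<Longrightarrow> (Q has_real_derivative q s) (at s within {a..b})"
  shows "(q has_integral (Q b - Q a)) {a..b}"
  using fundamental_theorem_of_calculus[OF assms(1), of Q q] assms(2)
  by (auto simp: has_real_derivative_iff_has_vector_derivative)

lemma ftc_sub:
  assumes "0 \<le> a" "a \<le> b" "b \<le> 1"
    "\<And>s. s \<in> {0..1} \<Longrightarrow> (Q has_real_derivative q s) (at s within {0..1})"
  shows "(q has_integral (Q b - Q a)) {a..b}"
proof (rule ftc_real[OF assms(2)])
  fix s assume s: "s \<in> {a..b}"
  then have "s \<in> {0..1}" using assms by auto
  from assms(4)[OF this] show "(Q has_real_derivative q s) (at s within {a..b})"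
    by (rule DERIV_subset) (use assms in auto)
qed

lemma integral00[simp]: "integral {0..0::real} f = 0"
  by (metis box_real(2) integral_refl)

lemma expint_deriv:
  assumes "continuous_on {0..1} p" "t \<in> {0..1}"
  shows "((\<lambda>t. exp (integral {0..t} p)) has_real_derivative p t * exp (integral {0..t} p)) (at t within {0..1})"
  using DERIV_chain2[OF DERIV_exp integral_has_real_derivative[OF assms]] by (simp add: mult.commute)

lemma lin_formula:
  assumes k: "continuous_on {0..1} k"
   and d: "\<And>s. s \<in> {0..1} \<Longrightarrow> (w has_real_derivative k s * w s) (at s within {0..1})"
   and t: "t \<in> {0..1}"
  shows "w t = w 0 * exp (integral {0..t} k)"
proof -
  define Q where "Q s = w s * exp (- integral {0..s} k)" for s
  have dQ: "(Q has_real_derivative 0) (at s within {0..1})" if s: "s \<in> {0..1}" for s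
  proof -
    from DERIV_mult[OF d[OF s] DERIV_chain2[OF DERIV_exp DERIV_minus[OF integral_has_real_derivative[OF k s]]]]
    show ?thesis unfolding Q_def by (rule DERIV_cong) (simp add: algebra_simps)
  qed
  have i: "((\<lambda>_. 0) has_integral (Q t - Q 0)) {0..t}"
    using ftc_sub[of 0 t, OF _ _ _ dQ] t by auto
  have "Q t = Q 0" using has_integral_unique[OF i has_integral_0] by simp
  then show ?thesis unfolding Q_def by (simp add: exp_minus field_simps)
qed

lemma const_sign:
  fixes f :: "real \<Rightarrow> real"
  assumes "continuous_on {0..1} f" "\<And>t. t \<in> {0..1} \<Longrightarrow> f t \<noteq> 0"
  shows "(\<forall>t\<in>{0..1}. f t > 0) \<or> (\<forall>t\<in>{0..1}. f t < 0)"
proof (rule ccontr)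
  assume "\<not> ?thesis"
  then obtain s1 s2 where s: "s1 \<in> {0..1}" "s2 \<in> {0..1}" "f s1 > 0" "f s2 < 0"
    using assms(2) by (metis linorder_neqE_linordered_idom)
  show False
  proof (cases "s1 \<le> s2")
    case True
    have "continuous_on {s1..s2} f" using assms(1) by (rule continuous_on_subset) (use s in auto)
    from IVT2'[of f s2 0 s1, OF _ _ True this] s obtain z where "s1 \<le> z" "z \<le> s2" "f z = 0" by auto
    then show False using assms(2)[of z] s by auto
  next
    case False
    have "continuous_on {s2..s1} f" using assms(1) by (rule continuous_on_subset) (use s in auto)
    from IVT'[of f s2 0 s1, OF _ _ _ this] s False obtain z where "s2 \<le> z" "z \<le> s1" "f z = 0" by auto
    then show False using assms(2)[of z] s by auto
  qed
qed

lemma integral_pos: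
  fixes f :: "real \<Rightarrow> real"
  assumes "continuous_on {0..1} f" "\<And>t. t \<in> {0..1} \<Longrightarrow> f t \<ge> 0" "\<exists>t\<in>{0..1}. f t \<noteq> 0"
    "(f has_integral I) {0..1}"
  shows "I > 0"
proof -
  have I: "I = integral {0..1} f" using assms(4) by (simp add: integral_unique)
  have "I \<ge> 0" using has_integral_nonneg[OF assms(4)] assms(2) by auto
  moreover have "I \<noteq> 0" using integral_eq_0_iff[of 0 1 f] assms I by auto
  ultimately show ?thesis by auto
qed

definition clamp01 :: "real \<Rightarrow> real" where "clamp01 t = max 0 (min 1 t)"

lemma picard:
  fixes F :: "real \<Rightarrow> real \<Rightarrow> real" and L :: real
  assumes L: "L > 0"
    and lip: "\<And>t u v. t \<in> {0..1} \<Longrightarrow> \<bar>F t u - F t v\<bar> \<le> L * \<bar>u - v\<bar>"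
    and cont: "\<And>v. continuous_on {0..1} v \<Longrightarrow> continuous_on {0..1} (\<lambda>s. F s (v s))"
  shows "\<exists>w. w 0 = \<delta> \<and> (\<forall>t\<in>{0..1}. (w has_real_derivative F t (w t)) (at t within {0..1}))"
proof -
  define K where "K = 2 * L"
  have K: "K > 0" using L by (simp add: K_def)
  define g where "g v s = F s (exp (K * s) * v s)" for v :: "real \<Rightarrow> real" and s
  define h where "h v t = exp (- K * t) * (\<delta> + integral {0..t} (g v))" for v t
  have gc: "continuous_on {0..1} (g v)" if "continuous_on {0..1} v" for v
    unfolding g_def by (intro cont continuous_intros that)
  have hc: "continuous_on {0..1} (h v)" if "continuous_on {0..1} v" for v
    unfolding h_def by (intro continuous_intros indefinite_integral_continuous_1 integrable_continuous_real gc that)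
  have cl: "clamp01 t \<in> {0..1}" for t by (auto simp: clamp01_def)
  have clc: "continuous_on UNIV clamp01" unfolding clamp01_def by (intro continuous_intros)
  have inb: "(\<lambda>t. h v (clamp01 t)) \<in> bcontfun" if "continuous_on {0..1} v" for v
  proof -
    have c: "continuous_on UNIV (\<lambda>t. h v (clamp01 t))"
    proof -
      have "range clamp01 \<subseteq> {0..1}" using cl by auto
      then show ?thesis
        using continuous_on_compose[OF clc continuous_on_subset[OF hc[OF that]]] by (auto simp: o_def)
    qed
    have "range (\<lambda>t. h v (clamp01 t)) \<subseteq> h v ` {0..1}" using cl by auto
    moreover have "bounded (h v ` {0..1})"
      by (intro compact_imp_bounded compact_continuous_image hc that) auto
    ultimately have "bounded (range (\<lambda>t. h v (clamp01 t)))" by (rule bounded_subset[rotated])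
    with c show ?thesis by (simp add: bcontfun_def)
  qed
  define T where "T v = Bcontfun (\<lambda>t. h (apply_bcontfun v) (clamp01 t))" for v :: "real \<Rightarrow>\<^sub>C real"
  have Tapp: "apply_bcontfun (T v) t = h (apply_bcontfun v) (clamp01 t)" for v t
    unfolding T_def using inb[of "apply_bcontfun v"] by (simp add: Bcontfun_inverse)
  have contr: "dist (T v1) (T v2) \<le> (1/2) * dist v1 v2" for v1 v2
  proof (rule dist_bound)
    fix t
    define \<tau> where "\<tau> = clamp01 t"
    define d where "d = dist v1 v2"
    have \<tau>: "0 \<le> \<tau>" "\<tau> \<le> 1" using cl \<tau>_def by auto
    have d: "d \<ge> 0" by (simp add: d_def)
    have ic: "g (apply_bcontfun v) integrable_on {0..\<tau>}" for v
      by (rule integrable_continuous_real, rule continuous_on_subset[OF gc]) (use \<tau> in auto)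
    have bnd: "norm (g v1 s - g v2 s) \<le> L * d * exp (K * s)" if "s \<in> {0..\<tau>}" for s
    proof -
      have "norm (g v1 s - g v2 s) \<le> L * \<bar>exp (K * s) * v1 s - exp (K * s) * v2 s\<bar>"
        unfolding g_def using lip[of s] that \<tau> by auto
      also have "\<dots> = L * exp (K * s) * \<bar>v1 s - v2 s\<bar>"
        by (simp add: abs_mult flip: right_diff_distrib)
      also have "\<dots> \<le> L * exp (K * s) * d"
        using dist_bounded[of v1 s v2] L unfolding d_def dist_real_def by (intro mult_left_mono) auto
      finally show ?thesis by (simp add: algebra_simps)
    qed
    have hi: "((\<lambda>s. L * d * exp (K * s)) has_integral (L * d / K * exp (K * \<tau>) - L * d / K * exp (K * 0))) {0..\<tau>}"
    proof (rule ftc_real)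
      fix s assume "s \<in> {0..\<tau>}"
      show "((\<lambda>s. L * d / K * exp (K * s)) has_real_derivative L * d * exp (K * s)) (at s within {0..\<tau>})"
        using K by (auto intro!: derivative_eq_intros)
    qed (use \<tau> in auto)
    have "norm (integral {0..\<tau>} (g v1) - integral {0..\<tau>} (g v2)) \<le> L * d / K * exp (K * \<tau>) - L * d / K"
      using integral_norm_bound_integral[OF integrable_diff[OF ic ic] has_integral_integrable[OF hi] bnd]
        integral_unique[OF hi] integral_diff[OF ic ic] by simp
    then have "exp (- K * \<tau>) * \<bar>integral {0..\<tau>} (g v1) - integral {0..\<tau>} (g v2)\<bar>
       \<le> exp (- K * \<tau>) * (L * d / K * exp (K * \<tau>) - L * d / K)"
      by (intro mult_left_mono) auto
    also have "\<dots> = L * d / K - L * d / K * exp (- K * \<tau>)"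
      by (simp add: algebra_simps flip: exp_add)
    also have "\<dots> \<le> L * d / K" using L K d by simp
    also have "\<dots> = (1/2) * d" using L by (simp add: K_def)
    finally have "exp (- K * \<tau>) * \<bar>integral {0..\<tau>} (g v1) - integral {0..\<tau>} (g v2)\<bar> \<le> (1/2) * d" .
    moreover have "dist (T v1 t) (T v2 t) = exp (- K * \<tau>) * \<bar>integral {0..\<tau>} (g v1) - integral {0..\<tau>} (g v2)\<bar>"
      unfolding Tapp h_def \<tau>_def[symmetric] dist_real_def
      by (simp add: abs_mult flip: right_diff_distrib)
    ultimately show "dist (T v1 t) (T v2 t) \<le> (1/2) * dist v1 v2" by (simp add: d_def)
  qed
  obtain v where v: "T v = v" using banach_fix_type[of "1/2" T] contr by auto
  define w where "w t = \<delta> + integral {0..t} (g v)" for t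
  show ?thesis
  proof (intro exI conjI ballI)
    show "w 0 = \<delta>" by (simp add: w_def)
    fix t :: real assume t: "t \<in> {0..1}"
    have ct: "clamp01 t = t" using t by (simp add: clamp01_def)
    have "apply_bcontfun v t = h v t" using Tapp[of v t] v ct by simp
    then have "exp (K * t) * v t = w t" unfolding h_def w_def
      by (simp add: algebra_simps flip: exp_add)
    then have gv: "g v t = F t (w t)" by (simp add: g_def)
    have "((\<lambda>t. \<delta> + integral {0..t} (g v)) has_real_derivative 0 + g v t) (at t within {0..1})"
      by (intro DERIV_add DERIV_const integral_has_real_derivative gc t) simp
    then show "(w has_real_derivative F t (w t)) (at t within {0..1})"
      by (simp add: w_def[abs_def] gv)
  qed
qed

lemma cont_bound:
  fixes f :: "real \<Rightarrow> real"
  assumes "continuous_on {0..1} f"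
  obtains M where "M > 0" "\<And>t. t \<in> {0..1} \<Longrightarrow> \<bar>f t\<bar> \<le> M"
proof -
  have "bounded (f ` {0..1})" by (intro compact_imp_bounded compact_continuous_image assms) auto
  then obtain M where "M > 0" "\<forall>y\<in>f ` {0..1}. norm y \<le> M" by (auto simp: bounded_pos)
  then show ?thesis using that by auto
qed

lemma poly_id: "(A::real) * y ^ 3 + B * y\<^sup>2 + C * y - (A * x ^ 3 + B * x\<^sup>2 + C * x) =
   (A * (x\<^sup>2 + x * y + y\<^sup>2) + B * (x + y) + C) * (y - x)"
  by algebra

lemma sol_diff:
  assumes cA: "continuous_on {0..1} A" and cB: "continuous_on {0..1} B" and cC: "continuous_on {0..1} C"
    and x: "abel_sol A B C x" and y: "abel_sol A B C y" and t: "t \<in> {0..1}"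
  shows "y t - x t = (y 0 - x 0) * exp (integral {0..t} (\<lambda>s. A s * ((x s)^2 + x s * y s + (y s)^2) + B s * (x s + y s) + C s))"
proof -
  have cx: "continuous_on {0..1} x" and cy: "continuous_on {0..1} y" using x y by (auto intro: sol_cont)
  let ?G = "\<lambda>s. A s * ((x s)^2 + x s * y s + (y s)^2) + B s * (x s + y s) + C s"
  have "(\<lambda>s. y s - x s) t = (\<lambda>s. y s - x s) 0 * exp (integral {0..t} ?G)"
  proof (rule lin_formula[OF _ _ t])
    show "continuous_on {0..1} ?G" by (intro continuous_intros cA cB cC cx cy)
    fix s :: real assume s: "s \<in> {0..1}"
    show "((\<lambda>s. y s - x s) has_real_derivative ?G s * (y s - x s)) (at s within {0..1})"
      by (rule DERIV_cong[OF DERIV_diff[OF y[unfolded abel_sol_def, rule_format, OF s] x[unfolded abel_sol_def, rule_format, OF s]]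
          poly_id[of "A s" "y s" "B s" "C s" "x s"]])
  qed
  then show ?thesis by simp
qed

lemma sol_unique:
  assumes "continuous_on {0..1} A" "continuous_on {0..1} B" "continuous_on {0..1} C"
    and "abel_sol A B C x" "abel_sol A B C y" "y 0 = x 0" "t \<in> {0..1}"
  shows "y t = x t"
  using sol_diff[OF assms(1-5,7)] assms(6) by simp

definition clp :: "real \<Rightarrow> real" where "clp u = max (-1) (min 1 u)"

lemma clp_lip: "\<bar>clp u - clp v\<bar> \<le> \<bar>u - v\<bar>" by (simp add: clp_def)
lemma clp_bound: "\<bar>clp u\<bar> \<le> 1" by (simp add: clp_def)
lemma clp_id: "\<bar>u\<bar> \<le> 1 \<Longrightarrow> clp u = u" by (simp add: clp_def)
lemma clp_ratio: "clp u = u * (1 / max 1 \<bar>u\<bar>)" by (auto simp: clp_def max_def min_def abs_if field_simps)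

lemma cubic_lip:
  fixes a b e c1 c2 :: real
  assumes "\<bar>c1\<bar> \<le> 1" "\<bar>c2\<bar> \<le> 1"
  shows "\<bar>c1 * (a + b * c1 + e * c1^2) - c2 * (a + b * c2 + e * c2^2)\<bar> \<le> (\<bar>a\<bar> + 2 * \<bar>b\<bar> + 3 * \<bar>e\<bar>) * \<bar>c1 - c2\<bar>"
proof -
  have eq: "c1 * (a + b * c1 + e * c1^2) - c2 * (a + b * c2 + e * c2^2) = (c1 - c2) * (a + b * (c1 + c2) + e * (c1^2 + c1*c2 + c2^2))"
    by (simp add: algebra_simps power2_eq_square)
  have s1: "\<bar>c1 + c2\<bar> \<le> 2" using assms by auto
  have c12: "\<bar>c1 * c2\<bar> \<le> 1" using assms by (simp add: abs_mult mult_le_one)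
  have q1: "c1^2 \<le> 1" "c2^2 \<le> 1" using assms by (simp_all add: abs_le_square_iff[symmetric] abs_square_le_1)
  have s2: "\<bar>c1^2 + c1*c2 + c2^2\<bar> \<le> 3" 
  proof -
    have p: "0 \<le> c1^2" "0 \<le> c2^2" by simp_all
    have "c1*c2 \<le> 1" "-1 \<le> c1*c2" using c12 by (auto simp: abs_le_iff)
    then show ?thesis unfolding abs_le_iff using q1 p by linarith
  qed
  have "\<bar>a + b * (c1 + c2) + e * (c1^2 + c1*c2 + c2^2)\<bar> \<le> \<bar>a\<bar> + \<bar>b\<bar> * \<bar>c1 + c2\<bar> + \<bar>e\<bar> * \<bar>c1^2 + c1*c2 + c2^2\<bar>"
    using abs_triangle_ineq[of "a + b * (c1 + c2)" "e * (c1^2 + c1*c2 + c2^2)"] abs_triangle_ineq[of a "b * (c1 + c2)"]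
    unfolding abs_mult by linarith
  also have "\<dots> \<le> \<bar>a\<bar> + 2 * \<bar>b\<bar> + 3 * \<bar>e\<bar>"
    using mult_left_mono[OF s1, of "\<bar>b\<bar>"] mult_left_mono[OF s2, of "\<bar>e\<bar>"] by (simp add: mult.commute)
  finally have "\<bar>a + b * (c1 + c2) + e * (c1^2 + c1*c2 + c2^2)\<bar> \<le> \<bar>a\<bar> + 2 * \<bar>b\<bar> + 3 * \<bar>e\<bar>" .
  then have "\<bar>c1 - c2\<bar> * \<bar>a + b * (c1 + c2) + e * (c1^2 + c1*c2 + c2^2)\<bar> \<le> \<bar>c1 - c2\<bar> * (\<bar>a\<bar> + 2 * \<bar>b\<bar> + 3 * \<bar>e\<bar>)"
    by (rule mult_left_mono) simp
  then show ?thesis unfolding eq abs_mult by (simp only: mult.commute)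
qed

lemma poly_id2: "(A::real) * x ^ 3 + B * x\<^sup>2 + C * x + w * ((3 * A * x\<^sup>2 + 2 * B * x + C) + (3 * A * x + B) * w + A * w\<^sup>2)
   = A * (x + w) ^ 3 + B * (x + w)\<^sup>2 + C * (x + w)"
  by algebra

lemma exist_near:
  assumes cA: "continuous_on {0..1} A" and cB: "continuous_on {0..1} B" and cC: "continuous_on {0..1} C"
    and x: "abel_sol A B C x"
  obtains \<rho> c where "\<rho> > 0" "c \<ge> 0"
    "\<And>\<xi>. \<bar>\<xi> - x 0\<bar> < \<rho> \<Longrightarrow> \<exists>y. abel_sol A B C y \<and> y 0 = \<xi> \<and>
          (\<forall>t\<in>{0..1}. \<bar>y t - x t\<bar> \<le> c * \<bar>\<xi> - x 0\<bar> \<and> \<bar>y t - x t\<bar> \<le> 1)"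
proof -
  have cx: "continuous_on {0..1} x" using x by (rule sol_cont)
  define g0 where "g0 t = 3 * A t * (x t)\<^sup>2 + 2 * B t * x t + C t" for t
  define g1 where "g1 t = 3 * A t * x t + B t" for t
  have c0: "continuous_on {0..1} g0" unfolding g0_def by (intro continuous_intros cA cB cC cx)
  have c1: "continuous_on {0..1} g1" unfolding g1_def by (intro continuous_intros cA cB cC cx)
  obtain M0 where M0: "M0 > 0" "\<And>t. t \<in> {0..1} \<Longrightarrow> \<bar>g0 t\<bar> \<le> M0" using cont_bound[OF c0] by blast
  obtain M1 where M1: "M1 > 0" "\<And>t. t \<in> {0..1} \<Longrightarrow> \<bar>g1 t\<bar> \<le> M1" using cont_bound[OF c1] by blast
  obtain M2 where M2: "M2 > 0" "\<And>t. t \<in> {0..1} \<Longrightarrow> \<bar>A t\<bar> \<le> M2" using cont_bound[OF cA] by blast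
  define Mg where "Mg = M0 + M1 + M2"
  have Mg: "Mg > 0" "\<And>t. t \<in> {0..1} \<Longrightarrow> \<bar>g0 t\<bar> \<le> Mg \<and> \<bar>g1 t\<bar> \<le> Mg \<and> \<bar>A t\<bar> \<le> Mg"
    using M0 M1 M2 unfolding Mg_def by force+
  define F where "F t u = clp u * (g0 t + g1 t * clp u + A t * (clp u)\<^sup>2)" for t u
  define M where "M = 3 * Mg"
  show ?thesis
  proof (rule that[of "exp (-M)" "exp M"])
    fix \<xi> assume \<xi>: "\<bar>\<xi> - x 0\<bar> < exp (-M)"
    define \<delta> where "\<delta> = \<xi> - x 0"
    have lip: "\<bar>F t u - F t v\<bar> \<le> (6 * Mg) * \<bar>u - v\<bar>" if t: "t \<in> {0..1}" for t u v
    proof -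
      have "\<bar>F t u - F t v\<bar> \<le> (\<bar>g0 t\<bar> + 2 * \<bar>g1 t\<bar> + 3 * \<bar>A t\<bar>) * \<bar>clp u - clp v\<bar>"
        unfolding F_def by (rule cubic_lip[OF clp_bound clp_bound])
      also have "\<dots> \<le> (6 * Mg) * \<bar>u - v\<bar>"
        using Mg(2)[OF t] clp_lip[of u v] by (intro mult_mono) auto
      finally show ?thesis .
    qed
    have cont: "continuous_on {0..1} (\<lambda>s. F s (v s))" if "continuous_on {0..1} v" for v
      unfolding F_def clp_def by (intro continuous_intros c0 c1 cA that)
    obtain w where w0: "w 0 = \<delta>" and dw: "\<forall>t\<in>{0..1}. (w has_real_derivative F t (w t)) (at t within {0..1})"
      using picard[of "6 * Mg" F \<delta>] lip cont Mg(1) by auto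
    have cw: "continuous_on {0..1} w" using dw by (intro DERIV_continuous_on) auto
    define P where "P t = g0 t + g1 t * clp (w t) + A t * (clp (w t))\<^sup>2" for t
    define Kf where "Kf t = (1 / max 1 \<bar>w t\<bar>) * P t" for t
    have cK: "continuous_on {0..1} Kf" unfolding Kf_def P_def clp_def
      by (intro continuous_intros c0 c1 cA cw) auto
    have FK: "F t (w t) = Kf t * w t" for t
    proof -
      have "F t (w t) = clp (w t) * P t" by (simp add: F_def P_def)
      also have "\<dots> = Kf t * w t" unfolding Kf_def by (subst clp_ratio) simp
      finally show ?thesis .
    qed
    have Kb: "\<bar>Kf t\<bar> \<le> M" if t: "t \<in> {0..1}" for t
    proof -
      have r: "\<bar>1 / max 1 \<bar>w t\<bar>\<bar> \<le> 1" by auto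
      have cb: "\<bar>clp (w t)\<bar> \<le> 1" by (rule clp_bound)
      have cb2: "\<bar>(clp (w t))\<^sup>2\<bar> \<le> 1" using cb by (simp add: abs_square_le_1)
      have "\<bar>P t\<bar> \<le> \<bar>g0 t\<bar> + \<bar>g1 t\<bar> * \<bar>clp (w t)\<bar> + \<bar>A t\<bar> * \<bar>(clp (w t))\<^sup>2\<bar>"
        unfolding P_def abs_mult[symmetric] by (rule order_trans[OF abs_triangle_ineq add_mono[OF abs_triangle_ineq order_refl]])
      also have "\<dots> \<le> Mg + Mg * 1 + Mg * 1"
        using Mg(2)[OF t] cb cb2 by (intro add_mono mult_mono) auto
      finally have "\<bar>P t\<bar> \<le> M" by (simp add: M_def)
      then have "\<bar>1 / max 1 \<bar>w t\<bar>\<bar> * \<bar>P t\<bar> \<le> 1 * M" using r by (intro mult_mono) auto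
      then show ?thesis by (simp add: Kf_def abs_mult)
    qed
    have wb: "\<bar>w t\<bar> \<le> exp M * \<bar>\<delta>\<bar>" if t: "t \<in> {0..1}" for t
    proof -
      have wt: "w t = \<delta> * exp (integral {0..t} Kf)"
        using lin_formula[OF cK _ t, of w] dw FK w0 by auto
      have ik: "Kf integrable_on {0..t}"
        by (rule integrable_continuous_real, rule continuous_on_subset[OF cK]) (use t in auto)
      have "norm (integral {0..t} Kf) \<le> integral {0..t} (\<lambda>_. M)"
        by (rule integral_norm_bound_integral[OF ik]) (use Kb t in auto)
      also have "\<dots> = t * M" using t by simp
      also have "\<dots> \<le> M" using t Mg(1) by (simp add: M_def mult_left_le_one_le)
      finally have "integral {0..t} Kf \<le> M" by simp
      then have "exp (integral {0..t} Kf) \<le> exp M" by simp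
      then show ?thesis unfolding wt abs_mult by (simp add: mult.commute mult_left_mono)
    qed
    have wb1: "\<bar>w t\<bar> \<le> 1" if t: "t \<in> {0..1}" for t
    proof -
      have "exp M * \<bar>\<delta>\<bar> \<le> exp M * exp (-M)" using \<xi> by (simp add: \<delta>_def)
      also have "\<dots> = 1" by (simp flip: exp_add)
      finally show ?thesis using wb[OF t] by simp
    qed
    show "\<exists>y. abel_sol A B C y \<and> y 0 = \<xi> \<and>
          (\<forall>t\<in>{0..1}. \<bar>y t - x t\<bar> \<le> exp M * \<bar>\<xi> - x 0\<bar> \<and> \<bar>y t - x t\<bar> \<le> 1)"
    proof (intro exI conjI ballI)
      show "abel_sol A B C (\<lambda>t. x t + w t)" unfolding abel_sol_def
      proof
        fix t :: real assume t: "t \<in> {0..1}"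
        have "F t (w t) = w t * ((3 * A t * (x t)\<^sup>2 + 2 * B t * x t + C t) + (3 * A t * x t + B t) * w t + A t * (w t)\<^sup>2)"
          using clp_id[OF wb1[OF t]] by (simp add: F_def g0_def g1_def)
        then show "((\<lambda>t. x t + w t) has_real_derivative A t * (x t + w t) ^ 3 + B t * (x t + w t)\<^sup>2 + C t * (x t + w t)) (at t within {0..1})"
          using DERIV_add[OF x[unfolded abel_sol_def, rule_format, OF t] dw[rule_format, OF t]]
          by (simp add: poly_id2)
      qed
      show "x 0 + w 0 = \<xi>" by (simp add: w0 \<delta>_def)
    qed (use wb wb1 in \<open>auto simp: \<delta>_def\<close>)
  qed (auto)
qed

lemma poincare_eq:
  assumes cA: "continuous_on {0..1} A" and cB: "continuous_on {0..1} B" and cC: "continuous_on {0..1} C"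
    and y: "abel_sol A B C y"
  shows "poincare A B C (y 0) = y 1"
  unfolding poincare_def
proof (rule the_equality)
  show "\<exists>x. abel_sol A B C x \<and> x 0 = y 0 \<and> x 1 = y 1" using y by blast
  fix z assume "\<exists>x. abel_sol A B C x \<and> x 0 = y 0 \<and> x 1 = z"
  then obtain x where "abel_sol A B C x" "x 0 = y 0" "x 1 = z" by blast
  then show "z = y 1" using sol_unique[OF cA cB cC y, of x 1] by auto
qed

lemma poincare_deriv:
  assumes cA: "continuous_on {0..1} A" and cB: "continuous_on {0..1} B" and cC: "continuous_on {0..1} C"
    and x: "abel_sol A B C x"
  shows "(poincare A B C has_real_derivative
           exp (integral {0..1} (\<lambda>t. 3 * A t * (x t)\<^sup>2 + 2 * B t * x t + C t))) (at (x 0))"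
proof -
  define g0 where "g0 t = 3 * A t * (x t)\<^sup>2 + 2 * B t * x t + C t" for t
  define I0 where "I0 = integral {0..1} g0"
  have cx: "continuous_on {0..1} x" using x by (rule sol_cont)
  have c0: "continuous_on {0..1} g0" unfolding g0_def by (intro continuous_intros cA cB cC cx)
  obtain \<rho> c where \<rho>: "\<rho> > 0" and c: "c \<ge> 0" and ex:
    "\<And>\<xi>. \<bar>\<xi> - x 0\<bar> < \<rho> \<Longrightarrow> \<exists>y. abel_sol A B C y \<and> y 0 = \<xi> \<and>
          (\<forall>t\<in>{0..1}. \<bar>y t - x t\<bar> \<le> c * \<bar>\<xi> - x 0\<bar> \<and> \<bar>y t - x t\<bar> \<le> 1)"
    using exist_near[OF cA cB cC x] by blast
  have cq: "continuous_on {0..1} (\<lambda>s. \<bar>A s\<bar> * (3 * \<bar>x s\<bar> + 1) + \<bar>B s\<bar>)"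
    by (intro continuous_intros cA cB cx)
  obtain Q where Q: "Q > 0" "\<And>t. t \<in> {0..1} \<Longrightarrow> \<bar>\<bar>A t\<bar> * (3 * \<bar>x t\<bar> + 1) + \<bar>B t\<bar>\<bar> \<le> Q"
    using cont_bound[OF cq] by blast
  define Y where "Y \<xi> = (SOME y. abel_sol A B C y \<and> y 0 = \<xi> \<and>
          (\<forall>t\<in>{0..1}. \<bar>y t - x t\<bar> \<le> c * \<bar>\<xi> - x 0\<bar> \<and> \<bar>y t - x t\<bar> \<le> 1))" for \<xi>
  define G where "G \<xi> s = A s * ((x s)^2 + x s * Y \<xi> s + (Y \<xi> s)^2) + B s * (x s + Y \<xi> s) + C s" for \<xi> s
  define J where "J \<xi> = integral {0..1} (G \<xi>)" for \<xi>
  have Yp: "abel_sol A B C (Y \<xi>) \<and> Y \<xi> 0 = \<xi> \<and>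
          (\<forall>t\<in>{0..1}. \<bar>Y \<xi> t - x t\<bar> \<le> c * \<bar>\<xi> - x 0\<bar> \<and> \<bar>Y \<xi> t - x t\<bar> \<le> 1)"
    if "\<bar>\<xi> - x 0\<bar> < \<rho>" for \<xi>
    using ex[OF that] unfolding Y_def by (rule someI_ex)
  have quot: "(poincare A B C \<xi> - poincare A B C (x 0)) / (\<xi> - x 0) = exp (J \<xi>)"
    if "\<bar>\<xi> - x 0\<bar> < \<rho>" "\<xi> \<noteq> x 0" for \<xi>
  proof -
    have y: "abel_sol A B C (Y \<xi>)" "Y \<xi> 0 = \<xi>" using Yp[OF that(1)] by auto
    have "poincare A B C \<xi> = Y \<xi> 1" using poincare_eq[OF cA cB cC y(1)] y(2) by simp
    moreover have "poincare A B C (x 0) = x 1" using poincare_eq[OF cA cB cC x] .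
    moreover have "Y \<xi> 1 - x 1 = (\<xi> - x 0) * exp (J \<xi>)"
      using sol_diff[OF cA cB cC x y(1), of 1] y(2) by (simp add: J_def G_def[abs_def])
    ultimately show ?thesis using that(2) by simp
  qed
  have Jb: "\<bar>J \<xi> - I0\<bar> \<le> c * Q * \<bar>\<xi> - x 0\<bar>" if "\<bar>\<xi> - x 0\<bar> < \<rho>" for \<xi>
  proof -
    have y: "abel_sol A B C (Y \<xi>)" "\<forall>t\<in>{0..1}. \<bar>Y \<xi> t - x t\<bar> \<le> c * \<bar>\<xi> - x 0\<bar> \<and> \<bar>Y \<xi> t - x t\<bar> \<le> 1"
      using Yp[OF that] by auto
    have cy: "continuous_on {0..1} (Y \<xi>)" using y(1) by (rule sol_cont)
    have cG: "continuous_on {0..1} (G \<xi>)" unfolding G_def by (intro continuous_intros cA cB cC cx cy)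
    have pt: "norm (G \<xi> s - g0 s) \<le> c * Q * \<bar>\<xi> - x 0\<bar>" if s: "s \<in> {0..1}" for s
    proof -
      define d where "d = Y \<xi> s - x s"
      have d1: "\<bar>d\<bar> \<le> c * \<bar>\<xi> - x 0\<bar>" "\<bar>d\<bar> \<le> 1" using y(2) s by (auto simp: d_def)
      have eq: "G \<xi> s - g0 s = d * (A s * (d + 3 * x s) + B s)"
        unfolding G_def g0_def d_def by (simp add: algebra_simps power2_eq_square)
      have "\<bar>A s * (d + 3 * x s) + B s\<bar> \<le> \<bar>A s\<bar> * (3 * \<bar>x s\<bar> + 1) + \<bar>B s\<bar>"
      proof -
        have "\<bar>d + 3 * x s\<bar> \<le> 3 * \<bar>x s\<bar> + 1" using d1 by linarith
        then have "\<bar>A s\<bar> * \<bar>d + 3 * x s\<bar> \<le> \<bar>A s\<bar> * (3 * \<bar>x s\<bar> + 1)" by (rule mult_left_mono) simp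
        then show ?thesis by (metis abs_mult abs_triangle_ineq add_mono order_trans order_refl)
      qed
      also have "\<dots> \<le> Q" using Q(2)[OF s] by simp
      finally have "\<bar>A s * (d + 3 * x s) + B s\<bar> \<le> Q" .
      then have "\<bar>d\<bar> * \<bar>A s * (d + 3 * x s) + B s\<bar> \<le> (c * \<bar>\<xi> - x 0\<bar>) * Q"
        using d1 by (intro mult_mono) auto
      then show ?thesis unfolding real_norm_def eq abs_mult by (simp add: mult_ac)
    qed
    have "norm (integral {0..1} (\<lambda>s. G \<xi> s - g0 s)) \<le> integral {0..1} (\<lambda>_::real. c * Q * \<bar>\<xi> - x 0\<bar>)"
    proof (rule Henstock_Kurzweil_Integration.integral_norm_bound_integral)
      show "(\<lambda>s. G \<xi> s - g0 s) integrable_on {0..1}"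
        by (rule integrable_continuous_real) (intro continuous_intros cG c0)
      show "(\<lambda>_::real. c * Q * \<bar>\<xi> - x 0\<bar>) integrable_on {0..1}"
        by (rule integrable_continuous_real) (intro continuous_intros)
    qed (rule pt)
    moreover have "integral {0..1} (\<lambda>s. G \<xi> s - g0 s) = J \<xi> - I0"
      unfolding J_def I0_def
      by (rule integral_diff) (use c0 cG in \<open>auto intro!: integrable_continuous_real\<close>)
    ultimately show ?thesis by simp
  qed
  have JI: "(J \<longlongrightarrow> I0) (at (x 0))"
  proof -
    have "((\<lambda>\<xi>. J \<xi> - I0) \<longlongrightarrow> 0) (at (x 0))"
    proof (rule Lim_null_comparison)
      show "\<forall>\<^sub>F \<xi> in at (x 0). norm (J \<xi> - I0) \<le> c * Q * \<bar>\<xi> - x 0\<bar>"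
        unfolding eventually_at using \<rho> Jb by (intro exI[of _ \<rho>]) (auto simp: dist_real_def)
      have "((\<lambda>\<xi>. c * Q * \<bar>\<xi> - x 0\<bar>) \<longlongrightarrow> c * Q * \<bar>x 0 - x 0\<bar>) (at (x 0))"
        by (intro tendsto_intros)
      then show "((\<lambda>\<xi>. c * Q * \<bar>\<xi> - x 0\<bar>) \<longlongrightarrow> 0) (at (x 0))" by simp
    qed
    then show ?thesis by (simp add: LIM_zero_iff)
  qed
  have "((\<lambda>\<xi>. (poincare A B C \<xi> - poincare A B C (x 0)) / (\<xi> - x 0)) \<longlongrightarrow> exp I0) (at (x 0))"
  proof (rule Lim_transform_eventually)
    show "((\<lambda>\<xi>. exp (J \<xi>)) \<longlongrightarrow> exp I0) (at (x 0))" by (intro tendsto_intros JI)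
    show "\<forall>\<^sub>F \<xi> in at (x 0). exp (J \<xi>) = (poincare A B C \<xi> - poincare A B C (x 0)) / (\<xi> - x 0)"
      unfolding eventually_at using \<rho> quot by (intro exI[of _ \<rho>]) (auto simp: dist_real_def)
  qed
  then show ?thesis unfolding has_field_derivative_iff I0_def g0_def .
qed

definition Ef :: "(real \<Rightarrow> real) \<Rightarrow> real \<Rightarrow> real" where "Ef C t = exp (integral {0..t} C)"

lemma Ef_facts:
  assumes cC: "continuous_on {0..1} C"
  shows "Ef C 0 = 1" "\<And>t. Ef C t > 0" "continuous_on {0..1} (Ef C)"
    "\<And>t. t \<in> {0..1} \<Longrightarrow> (Ef C has_real_derivative C t * Ef C t) (at t within {0..1})"
proof -
  show "Ef C 0 = 1" by (simp add: Ef_def)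
  show "\<And>t. Ef C t > 0" by (simp add: Ef_def)
  show d: "\<And>t. t \<in> {0..1} \<Longrightarrow> (Ef C has_real_derivative C t * Ef C t) (at t within {0..1})"
    unfolding Ef_def[abs_def] by (rule expint_deriv[OF cC])
  show "continuous_on {0..1} (Ef C)" using d by (rule DERIV_continuous_on)
qed

lemma x_formula:
  assumes cA: "continuous_on {0..1} A" and cB: "continuous_on {0..1} B" and cC: "continuous_on {0..1} C"
    and x: "abel_sol A B C x" and t: "t \<in> {0..1}"
  shows "x t = x 0 * exp (integral {0..t} (\<lambda>s. A s * (x s)\<^sup>2 + B s * x s + C s))"
proof (rule lin_formula[OF _ _ t])
  have cx: "continuous_on {0..1} x" using x by (rule sol_cont)
  show "continuous_on {0..1} (\<lambda>s. A s * (x s)\<^sup>2 + B s * x s + C s)" by (intro continuous_intros cA cB cC cx)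
  fix s :: real assume s: "s \<in> {0..1}"
  from x[unfolded abel_sol_def, rule_format, OF s]
  show "(x has_real_derivative (A s * (x s)\<^sup>2 + B s * x s + C s) * x s) (at s within {0..1})"
    by (rule DERIV_cong) (simp add: algebra_simps power2_eq_square power3_eq_cube)
qed

lemma x_nonzero:
  assumes cA: "continuous_on {0..1} A" and cB: "continuous_on {0..1} B" and cC: "continuous_on {0..1} C"
    and x: "abel_sol A B C x" and x0: "x 0 \<noteq> 0" and t: "t \<in> {0..1}"
  shows "x t \<noteq> 0"
  using x_formula[OF cA cB cC x t] x0 by simp

lemma x_kint:
  assumes cA: "continuous_on {0..1} A" and cB: "continuous_on {0..1} B" and cC: "continuous_on {0..1} C"
    and x: "abel_sol A B C x" and x0: "x 0 \<noteq> 0" and x1: "x 1 = x 0"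
  shows "((\<lambda>s. A s * (x s)\<^sup>2 + B s * x s + C s) has_integral 0) {0..1}"
proof -
  let ?k = "\<lambda>s. A s * (x s)\<^sup>2 + B s * x s + C s"
  have cx: "continuous_on {0..1} x" using x by (rule sol_cont)
  have ck: "continuous_on {0..1} ?k" by (intro continuous_intros cA cB cC cx)
  have "exp (integral {0..1} ?k) = 1" using x_formula[OF cA cB cC x, of 1] x0 x1 by simp
  then have "integral {0..1} ?k = 0" by simp
  then show ?thesis using integrable_integral[OF integrable_continuous_real[OF ck]] by simp
qed

lemma m_facts:
  assumes cA: "continuous_on {0..1} A" and cB: "continuous_on {0..1} B" and cC: "continuous_on {0..1} C"
    and intC: "integral {0..1} C = 0"
    and Wpos: "\<And>t. t \<in> {0..1} \<Longrightarrow> 0 \<le> a * A t * Ef C t + b * B t"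
    and Wnz: "\<exists>t\<in>{0..1}. a * A t * Ef C t + b * B t \<noteq> 0"
    and x: "abel_sol A B C x" and x0: "x 0 \<noteq> 0" and x1: "x 1 = x 0"
  shows "\<forall>t\<in>{0..1}. b * x t - a * Ef C t \<noteq> 0"
    and "integral {0..1} (\<lambda>t. C t + A t * (x t)\<^sup>2) \<noteq> 0"
proof -
  have cx: "continuous_on {0..1} x" using x by (rule sol_cont)
  note E = Ef_facts[OF cC]
  have E1: "Ef C 1 = 1" by (simp add: Ef_def intC)
  have xnz: "x t \<noteq> 0" if "t \<in> {0..1}" for t using x_nonzero[OF cA cB cC x x0 that] .
  define p where "p t = C t + A t * (x t)\<^sup>2" for t
  define m where "m t = b * x t - a * Ef C t" for t
  define s where "s t = m t * exp (- integral {0..t} p)" for t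
  define r where "r t = (x t)\<^sup>2 * (a * A t * Ef C t + b * B t) * exp (- integral {0..t} p)" for t
  have cp: "continuous_on {0..1} p" unfolding p_def by (intro continuous_intros cA cC cx)
  have cr: "continuous_on {0..1} r" unfolding r_def
    by (intro continuous_intros cA cB cx E(3) indefinite_integral_continuous_1 integrable_continuous_real cp)
  have r0: "r t \<ge> 0" if "t \<in> {0..1}" for t unfolding r_def using Wpos[OF that] by simp
  have rnz: "\<exists>t\<in>{0..1}. r t \<noteq> 0" using Wnz xnz unfolding r_def by auto
  have ds: "(s has_real_derivative r t) (at t within {0..1})" if t: "t \<in> {0..1}" for t
  proof -
    have dm: "(m has_real_derivative b * (A t * (x t)^3 + B t * (x t)\<^sup>2 + C t * x t) - a * (C t * Ef C t)) (at t within {0..1})"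
      unfolding m_def[abs_def]
      by (intro DERIV_diff DERIV_cmult x[unfolded abel_sol_def, rule_format, OF t] E(4)[OF t])
    have de: "((\<lambda>t. exp (- integral {0..t} p)) has_real_derivative exp (- integral {0..t} p) * (- p t)) (at t within {0..1})"
      by (rule DERIV_chain2[OF DERIV_exp DERIV_minus[OF integral_has_real_derivative[OF cp t]]])
    from DERIV_mult[OF dm de] show ?thesis unfolding s_def[abs_def]
      by (rule DERIV_cong) (simp add: r_def p_def m_def algebra_simps power2_eq_square power3_eq_cube)
  qed
  have int01: "(r has_integral (s 1 - s 0)) {0..1}" using ftc_sub[of 0 1 s r] ds by auto
  have spos: "s 1 - s 0 > 0" by (rule integral_pos[OF cr r0 rnz int01])
  have s0: "s 0 = m 0" by (simp add: s_def)
  have m10: "m 1 = m 0" by (simp add: m_def x1 E1 E(1))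
  define P where "P = integral {0..1} p"
  have s1: "s 1 = m 0 * exp (- P)" by (simp add: s_def P_def m10)
  have mono1: "s t \<ge> s 0" if t: "t \<in> {0..1}" for t
    using has_integral_nonneg[OF ftc_sub[of 0 t s r] r0] t ds by auto
  have mono2: "s t \<le> s 1" if t: "t \<in> {0..1}" for t
    using has_integral_nonneg[OF ftc_sub[of t 1 s r] r0] t ds by auto
  have mform: "m t = s t * exp (integral {0..t} p)" for t by (simp add: s_def flip: exp_add)
  show "\<forall>t\<in>{0..1}. b * x t - a * Ef C t \<noteq> 0"
  proof
    fix t :: real assume t: "t \<in> {0..1}"
    consider "m 0 = 0" | "m 0 > 0" | "m 0 < 0" by linarith
    then have "m t \<noteq> 0"
    proof cases
      case 1 then show ?thesis using spos s0 s1 by simp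
    next
      case 2 then show ?thesis using mono1[OF t] s0 mform[of t] by (metis exp_gt_zero less_le_trans mult_pos_pos order_less_irrefl)
    next
      case 3
      then have "s 1 < 0" using s1 by (simp add: mult_neg_pos)
      then show ?thesis using mono2[OF t] mform[of t] by (metis exp_gt_zero mult_neg_pos not_less order_le_less_trans order_less_irrefl)
    qed
    then show "b * x t - a * Ef C t \<noteq> 0" by (simp add: m_def)
  qed
  show "integral {0..1} (\<lambda>t. C t + A t * (x t)\<^sup>2) \<noteq> 0"
  proof
    assume "integral {0..1} (\<lambda>t. C t + A t * (x t)\<^sup>2) = 0"
    then have "P = 0" by (simp add: P_def p_def[abs_def])
    then show False using spos s0 s1 by simp
  qed
qed

lemma h_alg1:
  fixes X Ee A B a b :: real
  assumes "X \<noteq> 0" "b * X - a * Ee \<noteq> 0" "a \<noteq> 0"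
  shows "Ee\<^sup>2 * (A * X + B) / (b * X - a * Ee)
       = - (1 / a) * (Ee * (A * X + B)) + (b / a\<^sup>2) * (a * (Ee * (A * X + B)) / (b + a * (- Ee / X)))"
proof -
  have v: "b + a * (- Ee / X) = (b * X - a * Ee) / X" using assms(1) by (simp add: field_simps)
  show ?thesis unfolding v using assms by (simp add: field_simps power2_eq_square)
qed

lemma h_alg0:
  fixes X Ee A B b :: real
  assumes "X \<noteq> 0" "b \<noteq> 0"
  shows "Ee\<^sup>2 * (A * X + B) / (b * X - 0 * Ee) = - (- Ee / X) * (Ee * (A * X + B)) / b"
  using assms by (simp add: field_simps power2_eq_square)

lemma h_diff:
  fixes x y Ee A B a b :: real
  assumes "b * x - a * Ee \<noteq> 0" "b * y - a * Ee \<noteq> 0"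
  shows "Ee\<^sup>2 * (A * x + B) / (b * x - a * Ee) - Ee\<^sup>2 * (A * y + B) / (b * y - a * Ee)
    = Ee\<^sup>2 * (a * A * Ee + b * B) * ((y - x) / ((b * x - a * Ee) * (b * y - a * Ee)))"
  using assms by (simp add: field_simps power2_eq_square)

lemma h_int:
  assumes cA: "continuous_on {0..1} A" and cB: "continuous_on {0..1} B" and cC: "continuous_on {0..1} C"
    and intC: "integral {0..1} C = 0"
    and x: "abel_sol A B C x" and x0: "x 0 \<noteq> 0" and x1: "x 1 = x 0"
    and mnz: "\<forall>t\<in>{0..1}. b * x t - a * Ef C t \<noteq> 0"
  shows "((\<lambda>t. (Ef C t)\<^sup>2 * (A t * x t + B t) / (b * x t - a * Ef C t)) has_integral 0) {0..1}"
proof -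
  have cx: "continuous_on {0..1} x" using x by (rule sol_cont)
  note E = Ef_facts[OF cC]
  have E1: "Ef C 1 = 1" by (simp add: Ef_def intC)
  have xnz: "x t \<noteq> 0" if "t \<in> {0..1}" for t using x_nonzero[OF cA cB cC x x0 that] .
  define u where "u t = - Ef C t / x t" for t
  define du where "du t = Ef C t * (A t * x t + B t)" for t
  have dU: "(u has_real_derivative du t) (at t within {0..1})" if t: "t \<in> {0..1}" for t
  proof -
    from DERIV_minus[OF DERIV_divide[OF E(4)[OF t] x[unfolded abel_sol_def, rule_format, OF t] xnz[OF t]]]
    show ?thesis unfolding u_def[abs_def] du_def minus_divide_left[symmetric]
      by (rule DERIV_cong) (use xnz[OF t] in \<open>simp add: field_simps power2_eq_square power3_eq_cube\<close>)
  qed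
  have u10: "u 1 = u 0" by (simp add: u_def E1 E(1) x1)
  have cdu: "continuous_on {0..1} du" unfolding du_def by (intro continuous_intros cA cB cx E(3))
  have idu: "(du has_integral 0) {0..1}" using ftc_sub[of 0 1 u du] dU u10 by auto
  show ?thesis
  proof (cases "a = 0")
    case True
    have b: "b \<noteq> 0" using mnz True by (metis atLeastAtMost_iff mult_zero_left zero_le_one order_refl diff_zero)
    define F where "F t = - (u t)\<^sup>2 / (2 * b)" for t
    have dF: "(F has_real_derivative - u t * du t / b) (at t within {0..1})" if t: "t \<in> {0..1}" for t
    proof -
      from DERIV_divide[OF DERIV_minus[OF DERIV_power[OF dU[OF t], of 2]] DERIV_const[of "2 * b"]] b
      show ?thesis unfolding F_def[abs_def]
        by (rule_tac DERIV_cong) (auto simp: field_simps power2_eq_square)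
    qed
    have "((\<lambda>t. - u t * du t / b) has_integral (F 1 - F 0)) {0..1}" using ftc_sub[of 0 1 F] dF by auto
    then have i: "((\<lambda>t. - u t * du t / b) has_integral 0) {0..1}" by (simp add: F_def u10)
    show ?thesis
      by (rule has_integral_eq[OF _ i]) (use xnz b True in \<open>simp add: u_def du_def power2_eq_square mult_ac\<close>)
  next
    case False
    define v where "v t = b + a * u t" for t
    have vnz: "v t \<noteq> 0" if t: "t \<in> {0..1}" for t
    proof -
      have "v t = (b * x t - a * Ef C t) / x t" using xnz[OF t] by (simp add: v_def u_def field_simps)
      then show ?thesis using mnz t xnz[OF t] by simp
    qed
    define k where "k t = a * du t / v t" for t
    have cv: "continuous_on {0..1} v" unfolding v_def u_def
      by (intro continuous_intros E(3) cx) (use xnz in auto)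
    have ck: "continuous_on {0..1} k" unfolding k_def
      by (intro continuous_intros cdu cv) (use vnz in auto)
    have "v 1 = v 0 * exp (integral {0..1} k)"
    proof (rule lin_formula[OF ck])
      fix s :: real assume s: "s \<in> {0..1}"
      from DERIV_add[OF DERIV_const[of b] DERIV_cmult[OF dU[OF s], of a]]
      show "(v has_real_derivative k s * v s) (at s within {0..1})" unfolding v_def[abs_def]
        by (rule DERIV_cong) (use vnz[OF s] in \<open>simp add: k_def v_def\<close>)
    qed auto
    moreover have "v 1 = v 0" by (simp add: v_def u10)
    ultimately have "integral {0..1} k = 0" using vnz[of 0] by simp
    then have ik: "(k has_integral 0) {0..1}"
      using integrable_integral[OF integrable_continuous_real[OF ck]] by simp
    have i: "((\<lambda>t. - (1 / a) * du t + (b / a\<^sup>2) * k t) has_integral (- (1 / a) * 0 + (b / a\<^sup>2) * 0)) {0..1}"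
      using has_integral_add[OF has_integral_mult_right[OF idu, of "- (1 / a)"] has_integral_mult_right[OF ik, of "b / a\<^sup>2"]]
      by simp
    show ?thesis
      using has_integral_eq[OF _ i] xnz mnz False by (simp add: k_def v_def u_def du_def h_alg1)
  qed
qed

lemma orbit_uniq:
  assumes cA: "continuous_on {0..1} A" and cB: "continuous_on {0..1} B" and cC: "continuous_on {0..1} C"
    and intC: "integral {0..1} C = 0"
    and Wpos: "\<And>t. t \<in> {0..1} \<Longrightarrow> 0 \<le> a * A t * Ef C t + b * B t"
    and Wnz: "\<exists>t\<in>{0..1}. a * A t * Ef C t + b * B t \<noteq> 0"
    and x: "abel_sol A B C x" and x0: "x 0 \<noteq> 0" and x1: "x 1 = x 0"
    and y: "abel_sol A B C y" and y0: "y 0 \<noteq> 0" and y1: "y 1 = y 0"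
  shows "\<forall>t\<in>{0..1}. x t = y t"
proof (rule ccontr)
  assume "\<not> ?thesis"
  then obtain t0 where t0: "t0 \<in> {0..1}" "x t0 \<noteq> y t0" by auto
  have xy0: "y 0 \<noteq> x 0" using sol_unique[OF cA cB cC x y _ t0(1)] t0 by auto
  have cx: "continuous_on {0..1} x" using x by (rule sol_cont)
  have cy: "continuous_on {0..1} y" using y by (rule sol_cont)
  note E = Ef_facts[OF cC]
  have dnz: "y t - x t \<noteq> 0" if "t \<in> {0..1}" for t
    using sol_diff[OF cA cB cC x y that] xy0 by simp
  have mx: "\<forall>t\<in>{0..1}. b * x t - a * Ef C t \<noteq> 0" by (rule m_facts(1)[OF cA cB cC intC Wpos Wnz x x0 x1])
  have my: "\<forall>t\<in>{0..1}. b * y t - a * Ef C t \<noteq> 0" by (rule m_facts(1)[OF cA cB cC intC Wpos Wnz y y0 y1])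
  define D where "D t = (y t - x t) / ((b * x t - a * Ef C t) * (b * y t - a * Ef C t))" for t
  have cD: "continuous_on {0..1} D" unfolding D_def
    by (intro continuous_intros cx cy E(3)) (use mx my in auto)
  have Dnz: "D t \<noteq> 0" if "t \<in> {0..1}" for t using dnz[OF that] mx my that by (simp add: D_def)
  obtain \<sigma> :: real where \<sigma>: "\<sigma> = 1 \<or> \<sigma> = -1" "\<And>t. t \<in> {0..1} \<Longrightarrow> \<sigma> * D t > 0"
  proof -
    from const_sign[OF cD Dnz] show ?thesis
    proof
      assume "\<forall>t\<in>{0..1}. D t > 0" then show ?thesis using that[of 1] by auto
    next
      assume "\<forall>t\<in>{0..1}. D t < 0" then show ?thesis using that[of "-1"] by auto
    qed
  qed
  note hx = h_int[OF cA cB cC intC x x0 x1 mx]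
  note hy = h_int[OF cA cB cC intC y y0 y1 my]
  define f where "f t = (Ef C t)\<^sup>2 * (a * A t * Ef C t + b * B t) * (\<sigma> * D t)" for t
  have fi: "(f has_integral \<sigma> * (0 - 0)) {0..1}"
  proof (rule has_integral_eq[OF _ has_integral_mult_right[OF has_integral_diff[OF hx hy]]])
    fix t :: real assume t: "t \<in> {0..1}"
    show "\<sigma> * ((Ef C t)\<^sup>2 * (A t * x t + B t) / (b * x t - a * Ef C t) -
           (Ef C t)\<^sup>2 * (A t * y t + B t) / (b * y t - a * Ef C t)) = f t"
      unfolding h_diff[OF mx[rule_format, OF t] my[rule_format, OF t]] f_def D_def
      by (simp only: mult.assoc mult.left_commute mult.commute)
  qed
  have cf: "continuous_on {0..1} f" unfolding f_def by (intro continuous_intros cA cB E(3) cD)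
  have f0: "f t \<ge> 0" if "t \<in> {0..1}" for t
  proof -
    have "0 \<le> (Ef C t)\<^sup>2 * (a * A t * Ef C t + b * B t)" using Wpos[OF that] by simp
    from mult_nonneg_nonneg[OF this less_imp_le[OF \<sigma>(2)[OF that]]] show ?thesis unfolding f_def .
  qed
  have fnz: "\<exists>t\<in>{0..1}. f t \<noteq> 0"
  proof -
    obtain t1 where t1: "t1 \<in> {0..1}" "a * A t1 * Ef C t1 + b * B t1 \<noteq> 0" using Wnz by blast
    have "Ef C t1 \<noteq> 0" using E(2)[of t1] by simp
    moreover have "\<sigma> * D t1 \<noteq> 0" using \<sigma>(2)[OF t1(1)] by (metis less_irrefl)
    ultimately have "f t1 \<noteq> 0" using t1(2) unfolding f_def by simp
    then show ?thesis using t1(1) by blast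
  qed
  have "\<sigma> * (0 - 0) > (0::real)" by (rule integral_pos[OF cf f0 fnz fi])
  then show False by simp
qed

lemma core:
  assumes cA: "continuous_on {0..1} A" and cB: "continuous_on {0..1} B" and cC: "continuous_on {0..1} C"
    and intC: "integral {0..1} C = 0"
    and Wpos: "\<And>t. t \<in> {0..1} \<Longrightarrow> 0 \<le> a * A t * Ef C t + b * B t"
    and Wnz: "\<exists>t\<in>{0..1}. a * A t * Ef C t + b * B t \<noteq> 0"
  shows "(\<forall>x y. periodic_orbit A B C x \<and> nonzero_on01 x \<and> periodic_orbit A B C y \<and> nonzero_on01 y
            \<longrightarrow> (\<forall>t\<in>{0..1}. x t = y t))
       \<and> (\<forall>x. periodic_orbit A B C x \<and> nonzero_on01 x \<longrightarrow>
            (\<exists>D. (poincare A B C has_real_derivative D) (at (x 0)) \<and> D \<noteq> 1))"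
proof -
  have nz0: "x 0 \<noteq> 0" if "abel_sol A B C x" "nonzero_on01 x" for x
  proof
    assume "x 0 = 0"
    then have "x t = 0" if "t \<in> {0..1}" for t using x_formula[OF cA cB cC \<open>abel_sol A B C x\<close> that] by simp
    then show False using \<open>nonzero_on01 x\<close> by (auto simp: nonzero_on01_def)
  qed
  show ?thesis
  proof (intro conjI allI impI)
    fix x y assume h: "periodic_orbit A B C x \<and> nonzero_on01 x \<and> periodic_orbit A B C y \<and> nonzero_on01 y"
    then have x: "abel_sol A B C x" "x 1 = x 0" and y: "abel_sol A B C y" "y 1 = y 0"
      by (auto simp: periodic_orbit_def)
    show "\<forall>t\<in>{0..1}. x t = y t"
      by (rule orbit_uniq[OF cA cB cC intC Wpos Wnz x(1) nz0[OF x(1)] x(2) y(1) nz0[OF y(1)] y(2)])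
         (use h in auto)
  next
    fix x assume h: "periodic_orbit A B C x \<and> nonzero_on01 x"
    then have x: "abel_sol A B C x" "x 1 = x 0" by (auto simp: periodic_orbit_def)
    have x0: "x 0 \<noteq> 0" using nz0[OF x(1)] h by auto
    have cx: "continuous_on {0..1} x" using x(1) by (rule sol_cont)
    let ?g0 = "\<lambda>t. 3 * A t * (x t)\<^sup>2 + 2 * B t * x t + C t"
    let ?p = "\<lambda>t. C t + A t * (x t)\<^sup>2"
    define P where "P = integral {0..1} ?p"
    have Pnz: "P \<noteq> 0" unfolding P_def by (rule m_facts(2)[OF cA cB cC intC Wpos Wnz x(1) x0 x(2)])
    have ik: "((\<lambda>s. A s * (x s)\<^sup>2 + B s * x s + C s) has_integral 0) {0..1}"
      by (rule x_kint[OF cA cB cC x(1) x0 x(2)])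
    have ip: "(?p has_integral P) {0..1}" unfolding P_def
      by (rule integrable_integral, rule integrable_continuous_real) (intro continuous_intros cA cC cx)
    have iC: "(C has_integral 0) {0..1}"
      using integrable_integral[OF integrable_continuous_real[OF cC]] intC by simp
    have "((\<lambda>t. 2 * (A t * (x t)\<^sup>2 + B t * x t + C t) + ?p t - 2 * C t) has_integral (2 * 0 + P - 2 * 0)) {0..1}"
      by (intro has_integral_diff has_integral_add has_integral_mult_right ik ip iC)
    then have "(?g0 has_integral (2 * 0 + P - 2 * 0)) {0..1}"
      by (rule has_integral_eq[rotated]) (simp add: algebra_simps)
    then have "(?g0 has_integral P) {0..1}" by simp
    then have "integral {0..1} ?g0 = P" by (rule integral_unique)
    then have "exp (integral {0..1} ?g0) \<noteq> 1" using Pnz by simp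
    then show "\<exists>D. (poincare A B C has_real_derivative D) (at (x 0)) \<and> D \<noteq> 1"
      using poincare_deriv[OF cA cB cC x(1)] by blast
  qed
qed

theorem theorem5p1:
  fixes A B C :: "real \<Rightarrow> real" and a b :: real
  assumes "smooth_on {0..1} A" and "smooth_on {0..1} B" and "smooth_on {0..1} C"
    and "integral {0..1} C = 0"
    and "\<exists>t\<in>{0..1}. a * A t * exp (integral {0..t} C) + b * B t \<noteq> 0"
    and "(\<forall>t\<in>{0..1}. a * A t * exp (integral {0..t} C) + b * B t \<ge> 0)
       \<or> (\<forall>t\<in>{0..1}. a * A t * exp (integral {0..t} C) + b * B t \<le> 0)"
  shows "(\<forall>x y. periodic_orbit A B C x \<and> nonzero_on01 x \<and> periodic_orbit A B C y \<and> nonzero_on01 y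
            \<longrightarrow> (\<forall>t\<in>{0..1}. x t = y t))
       \<and> (\<forall>x. periodic_orbit A B C x \<and> nonzero_on01 x \<longrightarrow>
            (\<exists>D. (poincare A B C has_real_derivative D) (at (x 0)) \<and> D \<noteq> 1))"
proof -
  have cA: "continuous_on {0..1} A" using assms(1) by (rule smooth_cont)
  have cB: "continuous_on {0..1} B" using assms(2) by (rule smooth_cont)
  have cC: "continuous_on {0..1} C" using assms(3) by (rule smooth_cont)
  from assms(6) show ?thesis
  proof
    assume h: "\<forall>t\<in>{0..1}. a * A t * exp (integral {0..t} C) + b * B t \<ge> 0"
    have W1: "\<And>t. t \<in> {0..1} \<Longrightarrow> 0 \<le> a * A t * Ef C t + b * B t" using h by (simp add: Ef_def)
    have W2: "\<exists>t\<in>{0..1}. a * A t * Ef C t + b * B t \<noteq> 0" using assms(5) by (simp add: Ef_def)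
    show ?thesis by (rule core[OF cA cB cC assms(4) W1 W2])
  next
    assume h: "\<forall>t\<in>{0..1}. a * A t * exp (integral {0..t} C) + b * B t \<le> 0"
    have W1: "\<And>t. t \<in> {0..1} \<Longrightarrow> 0 \<le> (- a) * A t * Ef C t + (- b) * B t"
    proof -
      fix t :: real assume "t \<in> {0..1}"
      then have "a * A t * Ef C t + b * B t \<le> 0" using h by (simp add: Ef_def)
      then show "0 \<le> (- a) * A t * Ef C t + (- b) * B t" by simp
    qed
    have W2: "\<exists>t\<in>{0..1}. (- a) * A t * Ef C t + (- b) * B t \<noteq> 0"
    proof -
      obtain t where "t \<in> {0..1}" "a * A t * Ef C t + b * B t \<noteq> 0" using assms(5) by (auto simp: Ef_def)
      then show ?thesis by (intro bexI[of _ t]) auto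
    qed
    show ?thesis by (rule core[OF cA cB cC assms(4) W1 W2])
  qed
qed

end
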